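(* Let $\lambda>0$, $\gamma>2$, $c>0$ and $\rho>0$ be fixed, and let $W_e>0$. Define $$g(r)=r^{-\gamma-2}\Big(\gamma^2+\frac{4W_e}{c^2}r^2\Big),\qquad Z(s)=\int_0^\infty\big[1-e^{-s g(r)}\big]r\,dr,\qquad \mathrm{CRB}_{\mathrm{LB}}=\frac{4}{\rho}\int_0^\infty e^{-2\pi\lambda Z(s)}\,ds,$$ and $$\mathrm{CRB}_{\mathrm{LB,N}}=\frac{4}{\rho\gamma^2}\Big(\pi\lambda\,\Gamma\Big(\frac{\gamma}{\gamma+2}\Big)\Big)^{-\gamma/2-1}\Gamma\Big(2+\frac{\gamma}{2}\Big).$$ Then $$|\mathrm{CRB}_{\mathrm{LB,N}}-\mathrm{CRB}_{\mathrm{LB}}|=O(W_e),$$ i.e. it is bounded by a constant (independent of $W_e$) times $W_e$. Hence $\mathrm{CRB}_{\mathrm{LB}}$ converges to $\mathrm{CRB}_{\mathrm{LB,N}}$ as $W_e\to 0$.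
   Context: Here $\lambda$ is the sensor density of a homogeneous Poisson point process of sensors, $\gamma$ is the path-loss exponent, $c$ is the speed of light, $\rho$ is a signal-to-noise ratio constant, and $W_e$ is the effective bandwidth of the transmitted signal. $\Gamma$ denotes the Gamma function. *)

theory Defs
  imports "HOL-Analysis.Analysis"
begin

definition gfun :: "real \<Rightarrow> real \<Rightarrow> real \<Rightarrow> real \<Rightarrow> real" where
  "gfun \<gamma> c We r = r powr (-\<gamma> - 2) * (\<gamma>\<^sup>2 + 4 * We / c\<^sup>2 * r\<^sup>2)"

definition Zfun :: "real \<Rightarrow> real \<Rightarrow> real \<Rightarrow> real \<Rightarrow> real" where
  "Zfun \<gamma> c We s = (LBINT r:{0<..}. (1 - exp (- s * gfun \<gamma> c We r)) * r)"

definition CRB_LB :: "real \<Rightarrow> real \<Rightarrow> real \<Rightarrow> real \<Rightarrow> real \<Rightarrow> real" where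
  "CRB_LB lam \<gamma> c \<rho> We = 4 / \<rho> * (LBINT s:{0<..}. exp (- 2 * pi * lam * Zfun \<gamma> c We s))"

definition CRB_LB_N :: "real \<Rightarrow> real \<Rightarrow> real \<Rightarrow> real" where
  "CRB_LB_N lam \<gamma> \<rho> = 4 / (\<rho> * \<gamma>\<^sup>2) *
     (pi * lam * Gamma (\<gamma> / (\<gamma> + 2))) powr (- \<gamma> / 2 - 1) * Gamma (2 + \<gamma> / 2)"

end

theory Submission
  imports Defs "HOL-Real_Asymp.Real_Asymp"
begin

lemma E1: "(\<integral>\<^sup>+t. ennreal (exp (-t)) * indicator {y..} t \<partial>lborel) = ennreal (exp (-y))"
proof -
  have "(\<integral>\<^sup>+t. ennreal (exp (-t)) * indicator {y..} t \<partial>lborel) = 0 - (- exp (-y))"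
    apply (rule nn_integral_FTC_atLeast[where F="\<lambda>t. - exp (-t)"])
    apply measurable
      apply (auto intro!: derivative_eq_intros)
    apply real_asymp
    done
  then show ?thesis by simp
qed

lemma E2: "(\<integral>\<^sup>+t. ennreal (exp (-t)) * indicator {0..} t * indicator {..<y} t \<partial>lborel) = ennreal (1 - exp (-y))"
proof (cases "y \<le> 0")
  case True
  then have "(\<lambda>t. ennreal (exp (-t)) * indicator {0..} t * indicator {..<y} t) = (\<lambda>t. 0)"
    by (auto simp: indicator_def)
  moreover have "1 - exp (-y) \<le> 0" using True by simp
  ultimately show ?thesis by (simp add: ennreal_eq_0_iff)
next
  case False
  have "ennreal 1 = (\<integral>\<^sup>+t. ennreal (exp (-t)) * indicator {0..} t \<partial>lborel)"
    using E1[of 0] by simp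
  also have "\<dots> = (\<integral>\<^sup>+t. ennreal (exp (-t)) * indicator {0..} t * indicator {..<y} t + ennreal (exp (-t)) * indicator {y..} t \<partial>lborel)"
    using False by (intro nn_integral_cong) (auto simp: indicator_def)
  also have "\<dots> = (\<integral>\<^sup>+t. ennreal (exp (-t)) * indicator {0..} t * indicator {..<y} t \<partial>lborel) + ennreal (exp (-y))"
    by (subst nn_integral_add) (auto simp: E1)
  finally have *: "ennreal 1 = (\<integral>\<^sup>+t. ennreal (exp (-t)) * indicator {0..} t * indicator {..<y} t \<partial>lborel) + ennreal (exp (-y))" .
  have "ennreal (1 - exp (-y)) = ennreal 1 - ennreal (exp (-y))"
    by (subst ennreal_minus) auto
  also have "\<dots> = (\<integral>\<^sup>+t. ennreal (exp (-t)) * indicator {0..} t * indicator {..<y} t \<partial>lborel)"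
    unfolding * by (rule ennreal_add_diff_cancel_right) simp
  finally show ?thesis by simp
qed

lemma LCa:
  assumes [measurable]: "\<phi> \<in> borel_measurable borel" "w \<in> borel_measurable borel"
    and nn: "\<And>x. w x \<ge> 0"
  shows "(\<integral>\<^sup>+x. ennreal (w x * exp (-\<phi> x)) \<partial>lborel) =
    (\<integral>\<^sup>+t. ennreal (exp (-t)) * (\<integral>\<^sup>+x. ennreal (w x) * indicator {x. \<phi> x \<le> t} x \<partial>lborel) \<partial>lborel)"
proof -
  have "(\<integral>\<^sup>+x. ennreal (w x * exp (-\<phi> x)) \<partial>lborel) =
     (\<integral>\<^sup>+x. ennreal (w x) * (\<integral>\<^sup>+t. ennreal (exp (-t)) * indicator {\<phi> x..} t \<partial>lborel) \<partial>lborel)"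
    using nn by (intro nn_integral_cong) (simp add: E1 ennreal_mult)
  also have "\<dots> = (\<integral>\<^sup>+x. (\<integral>\<^sup>+t. ennreal (w x) * ennreal (exp (-t)) * (if \<phi> x \<le> t then 1 else 0) \<partial>lborel) \<partial>lborel)"
    by (intro nn_integral_cong) (auto simp: nn_integral_cmult[symmetric] indicator_def mult.assoc intro!: nn_integral_cong)
  also have "\<dots> = (\<integral>\<^sup>+t. (\<integral>\<^sup>+x. ennreal (w x) * ennreal (exp (-t)) * (if \<phi> x \<le> t then 1 else 0) \<partial>lborel) \<partial>lborel)"
    by (rule lborel_pair.Fubini'[symmetric]) measurable
  also have "\<dots> = (\<integral>\<^sup>+t. ennreal (exp (-t)) * (\<integral>\<^sup>+x. ennreal (w x) * indicator {x. \<phi> x \<le> t} x \<partial>lborel) \<partial>lborel)"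
    by (intro nn_integral_cong) (auto simp: nn_integral_cmult[symmetric] indicator_def mult_ac intro!: nn_integral_cong)
  finally show ?thesis .
qed

lemma LCb:
  assumes [measurable]: "\<phi> \<in> borel_measurable borel" "w \<in> borel_measurable borel"
    and nn: "\<And>x. w x \<ge> 0"
  shows "(\<integral>\<^sup>+x. ennreal (w x * (1 - exp (-\<phi> x))) \<partial>lborel) =
    (\<integral>\<^sup>+t. ennreal (exp (-t)) * indicator {0..} t * (\<integral>\<^sup>+x. ennreal (w x) * indicator {x. t < \<phi> x} x \<partial>lborel) \<partial>lborel)"
proof -
  have "(\<integral>\<^sup>+x. ennreal (w x * (1 - exp (-\<phi> x))) \<partial>lborel) =
     (\<integral>\<^sup>+x. ennreal (w x) * (\<integral>\<^sup>+t. ennreal (exp (-t)) * indicator {0..} t * indicator {..<\<phi> x} t \<partial>lborel) \<partial>lborel)"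
    using nn by (intro nn_integral_cong) (simp add: E2 ennreal_mult')
  also have "\<dots> = (\<integral>\<^sup>+x. (\<integral>\<^sup>+t. ennreal (w x) * ennreal (exp (-t)) * (if 0 \<le> t \<and> t < \<phi> x then 1 else 0) \<partial>lborel) \<partial>lborel)"
    by (intro nn_integral_cong) (auto simp: nn_integral_cmult[symmetric] indicator_def mult.assoc intro!: nn_integral_cong)
  also have "\<dots> = (\<integral>\<^sup>+t. (\<integral>\<^sup>+x. ennreal (w x) * ennreal (exp (-t)) * (if 0 \<le> t \<and> t < \<phi> x then 1 else 0) \<partial>lborel) \<partial>lborel)"
    by (rule lborel_pair.Fubini'[symmetric]) measurable
  also have "\<dots> = (\<integral>\<^sup>+t. ennreal (exp (-t)) * indicator {0..} t * (\<integral>\<^sup>+x. ennreal (w x) * indicator {x. t < \<phi> x} x \<partial>lborel) \<partial>lborel)"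
    by (intro nn_integral_cong) (auto simp: nn_integral_cmult[symmetric] indicator_def mult_ac intro!: nn_integral_cong)
  finally show ?thesis .
qed

lemma Gam:
  assumes "p > -1" "C \<ge> 0" "\<And>t. t > 0 \<Longrightarrow> f t = ennreal (C * t powr p)" "\<And>t. t < 0 \<Longrightarrow> f t = 0"
  shows "(\<integral>\<^sup>+t. ennreal (exp (-t)) * f t \<partial>lborel) = ennreal (C * Gamma (p+1))"
proof -
  have "AE t in lborel. ennreal (exp (-t)) * f t = ennreal C * (ennreal (t powr p / exp t) * indicator {0..} t)"
    using AE_lborel_singleton[of 0]
  proof eventually_elim
    case (elim t)
    show ?case
    proof (cases "t > 0")
      case True
      then show ?thesis using assms(2) assms(3)[of t]
        by (simp add: ennreal_mult[symmetric] exp_minus field_simps)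
    next
      case False
      then show ?thesis using elim assms(4)[of t] by simp
    qed
  qed
  then have "(\<integral>\<^sup>+t. ennreal (exp (-t)) * f t \<partial>lborel) = ennreal C * (\<integral>\<^sup>+t. ennreal (t powr p / exp t) * indicator {0..} t \<partial>lborel)"
    by (subst nn_integral_cong_AE[OF \<open>AE t in lborel. _\<close>]) (simp add: nn_integral_cmult)
  also have "(\<integral>\<^sup>+t. ennreal (t powr p / exp t) * indicator {0..} t \<partial>lborel) = ennreal (Gamma (p+1))"
    using Gamma_integral_real[of "p+1"] assms(1)
    by (intro nn_integral_has_integral_lebesgue') auto
  finally show ?thesis using assms(2) by (simp add: ennreal_mult')
qed

lemma P1:
  assumes "0 \<le> R" "p > -1"
  shows "(\<integral>\<^sup>+x. ennreal (x powr p) * indicator {0..R} x \<partial>lborel) = ennreal (R powr (p+1) / (p+1))"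
  by (rule nn_integral_has_integral_lebesgue'[OF _ has_integral_powr_from_0]) (use assms in auto)

lemma P2:
  assumes "0 < R" "p < -1"
  shows "(\<integral>\<^sup>+x. ennreal (x powr p) * indicator {R..} x \<partial>lborel) = ennreal (-(R powr (p+1)) / (p+1))"
  by (rule nn_integral_has_integral_lebesgue'[OF _ has_integral_powr_to_inf]) (use assms in auto)

lemma thresh:
  fixes r t k a :: real
  assumes "0<r" "0<t" "0<k" "0<a"
  shows "(t < k * r powr (-a)) \<longleftrightarrow> r < (k/t) powr (1/a)"
proof -
  define R where "R = (k/t) powr (1/a)"
  have kt: "k/t > 0" using assms by (simp add: divide_pos_pos)
  have R: "R > 0" "R powr a = k/t" using assms kt by (auto simp: R_def powr_powr)
  have "r < R \<longleftrightarrow> r powr a < R powr a"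
  proof
    assume "r < R" then show "r powr a < R powr a" using assms by (intro powr_less_mono2) auto
  next
    assume h: "r powr a < R powr a"
    show "r < R"
    proof (rule ccontr)
      assume "\<not> r < R"
      then have "R powr a \<le> r powr a" using assms R by (intro powr_mono2) auto
      with h show False by simp
    qed
  qed
  also have "\<dots> \<longleftrightarrow> t < k * r powr (-a)"
    unfolding R(2) using assms by (simp add: powr_minus field_simps)
  finally show ?thesis unfolding R_def by simp
qed

lemma F1:
  fixes k a :: real
  assumes k: "k > 0" and a: "a > 2"
  shows "(\<integral>\<^sup>+r. ennreal (indicator {0<..} r * r * (1 - exp (-(k * r powr (-a))))) \<partial>lborel)
     = ennreal (k powr (2/a) / 2 * Gamma (1 - 2/a))"
proof -
  have "(\<integral>\<^sup>+r. ennreal (indicator {0<..} r * r * (1 - exp (-(k * r powr (-a))))) \<partial>lborel)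
    = (\<integral>\<^sup>+t. ennreal (exp (-t)) * (indicator {0..} t * (\<integral>\<^sup>+r. ennreal (indicator {0<..} r * r) * indicator {r. t < k * r powr (-a)} r \<partial>lborel)) \<partial>lborel)"
    by (subst LCb) (auto simp: mult.assoc indicator_def)
  also have "\<dots> = ennreal (k powr (2/a) / 2 * Gamma (-(2/a) + 1))"
  proof (rule Gam)
    show "-(2/a) > -1" "0 \<le> k powr (2/a) / 2" using a by auto
    fix t :: real assume t: "t > 0"
    define R where "R = (k/t) powr (1/a)"
    have R: "R > 0" using k t by (simp add: R_def)
    have "AE r in lborel. ennreal (indicator {0<..} r * r) * indicator {r. t < k * r powr (-a)} r
       = ennreal (r powr 1) * indicator {0..R} r"
      using AE_lborel_singleton[of R]
    proof eventually_elim
      case (elim r)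
      show ?case
      proof (cases "r > 0")
        case True
        then show ?thesis using thresh[OF True t k, of a] a elim unfolding R_def[symmetric]
          by (auto simp: indicator_def)
      qed (auto simp: indicator_def)
    qed
    then have "(\<integral>\<^sup>+r. ennreal (indicator {0<..} r * r) * indicator {r. t < k * r powr (-a)} r \<partial>lborel)
       = ennreal (R powr (1+1) / (1+1))"
      using P1[of R 1] R by (simp add: nn_integral_cong_AE)
    also have "R powr (1+1) / (1+1) = k powr (2/a) / 2 * t powr (-(2/a))"
      using k t a by (simp add: R_def powr_powr powr_divide powr_minus field_simps)
    finally show "indicator {0..} t * (\<integral>\<^sup>+r. ennreal (indicator {0<..} r * r) * indicator {r. t < k * r powr (-a)} r \<partial>lborel)
      = ennreal (k powr (2/a) / 2 * t powr (-(2/a)))" using t by simp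
  next
    fix t :: real assume "t < 0" then show "indicator {0..} t * (\<integral>\<^sup>+r. ennreal (indicator {0<..} r * r) * indicator {r. t < k * r powr (-a)} r \<partial>lborel) = 0"
      by simp
  qed
  finally show ?thesis by (simp add: add.commute)
qed

lemma thresh2:
  fixes s t A b :: real
  assumes "0<s" "0<t" "0<A" "0<b"
  shows "(A * s powr b \<le> t) \<longleftrightarrow> s \<le> (t/A) powr (1/b)"
proof -
  define R where "R = (t/A) powr (1/b)"
  have kt: "t/A > 0" using assms by (simp add: divide_pos_pos)
  have R: "R > 0" "R powr b = t/A" using assms kt by (auto simp: R_def powr_powr)
  have "s \<le> R \<longleftrightarrow> s powr b \<le> R powr b"
  proof
    assume "s \<le> R" then show "s powr b \<le> R powr b" using assms by (intro powr_mono2) auto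
  next
    assume h: "s powr b \<le> R powr b"
    show "s \<le> R"
    proof (rule ccontr)
      assume "\<not> s \<le> R"
      then have "R powr b < s powr b" using assms R by (intro powr_less_mono2) auto
      with h show False by simp
    qed
  qed
  also have "\<dots> \<longleftrightarrow> A * s powr b \<le> t"
    unfolding R(2) using assms by (simp add: field_simps)
  finally show ?thesis unfolding R_def by simp
qed

lemma F2:
  fixes k a e :: real
  assumes k: "k > 0" and a: "a > 0" and e: "e < -1" "e + 1 > -a"
  shows "(\<integral>\<^sup>+r. ennreal (indicator {0<..} r * r powr e * exp (-(k * r powr (-a)))) \<partial>lborel)
     = ennreal (k powr ((e+1)/a) / (-(e+1)) * Gamma (-(e+1)/a + 1))"
proof -
  have "(\<integral>\<^sup>+r. ennreal (indicator {0<..} r * r powr e * exp (-(k * r powr (-a)))) \<partial>lborel)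
    = (\<integral>\<^sup>+t. ennreal (exp (-t)) * (\<integral>\<^sup>+r. ennreal (indicator {0<..} r * r powr e) * indicator {r. k * r powr (-a) \<le> t} r \<partial>lborel) \<partial>lborel)"
    by (subst LCa) (auto simp: mult.assoc indicator_def)
  also have "\<dots> = ennreal (k powr ((e+1)/a) / (-(e+1)) * Gamma (-(e+1)/a + 1))"
  proof (rule Gam)
    show "-(e+1)/a > -1" "0 \<le> k powr ((e+1)/a) / (-(e+1))" using a e by (auto simp: field_simps)
    fix t :: real assume t: "t > 0"
    define R where "R = (k/t) powr (1/a)"
    have R: "R > 0" using k t by (simp add: R_def)
    have "\<And>r. ennreal (indicator {0<..} r * r powr e) * indicator {r. k * r powr (-a) \<le> t} r
       = ennreal (r powr e) * indicator {R..} r"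
    proof -
      fix r :: real
      show "ennreal (indicator {0<..} r * r powr e) * indicator {r. k * r powr (-a) \<le> t} r
       = ennreal (r powr e) * indicator {R..} r"
      proof (cases "r > 0")
        case True
        then show ?thesis using thresh[OF True t k, of a] a unfolding R_def[symmetric]
          by (auto simp: indicator_def)
      qed (use R in \<open>auto simp: indicator_def\<close>)
    qed
    then have "(\<integral>\<^sup>+r. ennreal (indicator {0<..} r * r powr e) * indicator {r. k * r powr (-a) \<le> t} r \<partial>lborel)
       = ennreal (-(R powr (e+1)) / (e+1))"
      using P2[of R e] R e by simp
    also have "-(R powr (e+1)) / (e+1) = k powr ((e+1)/a) / (-(e+1)) * t powr (-(e+1)/a)"
    proof -
      have h: "t powr (-(e+1)/a) = inverse (t powr ((e+1)/a))"
        by (subst minus_divide_left[symmetric]) (rule powr_minus)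
      have "R powr (e+1) = k powr ((e+1)/a) / t powr ((e+1)/a)"
        using k t by (simp add: R_def powr_powr powr_divide)
      then have "-(R powr (e+1)) / (e+1) = -(k powr ((e+1)/a) / t powr ((e+1)/a)) / (e+1)" by simp
      also have "\<dots> = k powr ((e+1)/a) / (-(e+1)) * t powr (-(e+1)/a)"
      proof -
        have i: "inverse (- e - 1) = - inverse (e + 1)"
          by (subst inverse_minus_eq[symmetric]) simp
        show ?thesis unfolding h by (simp add: divide_inverse mult_ac i)
      qed
      finally show ?thesis .
    qed
    finally show "(\<integral>\<^sup>+r. ennreal (indicator {0<..} r * r powr e) * indicator {r. k * r powr (-a) \<le> t} r \<partial>lborel)
      = ennreal (k powr ((e+1)/a) / (-(e+1)) * t powr (-(e+1)/a))" .
  next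
    fix t :: real assume t: "t < 0"
    have "(\<lambda>r. ennreal (indicator {0<..} r * r powr e) * indicator {r. k * r powr (-a) \<le> t} r) = (\<lambda>r. 0)"
    proof
      fix r :: real
      have "r > 0 \<Longrightarrow> k * r powr (-a) > 0" using k by simp
      then show "ennreal (indicator {0<..} r * r powr e) * indicator {r. k * r powr (-a) \<le> t} r = 0"
        using t by (auto simp: indicator_def)
    qed
    then show "(\<integral>\<^sup>+r. ennreal (indicator {0<..} r * r powr e) * indicator {r. k * r powr (-a) \<le> t} r \<partial>lborel) = 0"
      by simp
  qed
  finally show ?thesis .
qed

lemma F4:
  fixes A b q :: real
  assumes A: "A > 0" and b: "b > 0" and q: "q > -1"
  shows "(\<integral>\<^sup>+s. ennreal (indicator {0<..} s * s powr q * exp (-(A * s powr b))) \<partial>lborel)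
     = ennreal ((1/A) powr ((q+1)/b) / (q+1) * Gamma ((q+1)/b + 1))"
proof -
  have "(\<integral>\<^sup>+s. ennreal (indicator {0<..} s * s powr q * exp (-(A * s powr b))) \<partial>lborel)
    = (\<integral>\<^sup>+t. ennreal (exp (-t)) * (\<integral>\<^sup>+s. ennreal (indicator {0<..} s * s powr q) * indicator {s. A * s powr b \<le> t} s \<partial>lborel) \<partial>lborel)"
    by (subst LCa) (auto simp: mult.assoc indicator_def)
  also have "\<dots> = ennreal ((1/A) powr ((q+1)/b) / (q+1) * Gamma ((q+1)/b + 1))"
  proof (rule Gam)
    show "(q+1)/b > -1" "0 \<le> (1/A) powr ((q+1)/b) / (q+1)" using b q by (auto simp: field_simps)
    fix t :: real assume t: "t > 0"
    define R where "R = (t/A) powr (1/b)"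
    have R: "R > 0" using A t by (simp add: R_def)
    have "AE s in lborel. ennreal (indicator {0<..} s * s powr q) * indicator {s. A * s powr b \<le> t} s
       = ennreal (s powr q) * indicator {0..R} s"
      using AE_lborel_singleton[of 0]
    proof eventually_elim
      case (elim s)
      show ?case
      proof (cases "s > 0")
        case True
        then show ?thesis using thresh2[OF True t A b] unfolding R_def[symmetric]
          by (auto simp: indicator_def)
      qed (use elim in \<open>auto simp: indicator_def\<close>)
    qed
    then have "(\<integral>\<^sup>+s. ennreal (indicator {0<..} s * s powr q) * indicator {s. A * s powr b \<le> t} s \<partial>lborel)
       = ennreal (R powr (q+1) / (q+1))"
      using P1[of R q] R q by (simp add: nn_integral_cong_AE)
    also have "R powr (q+1) / (q+1) = (1/A) powr ((q+1)/b) / (q+1) * t powr ((q+1)/b)"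
      using A t b q by (simp add: R_def powr_powr powr_divide field_simps)
    finally show "(\<integral>\<^sup>+s. ennreal (indicator {0<..} s * s powr q) * indicator {s. A * s powr b \<le> t} s \<partial>lborel)
      = ennreal ((1/A) powr ((q+1)/b) / (q+1) * t powr ((q+1)/b))" .
  next
    fix t :: real assume t: "t < 0"
    have "(\<lambda>s. ennreal (indicator {0<..} s * s powr q) * indicator {s. A * s powr b \<le> t} s) = (\<lambda>s. 0)"
    proof
      fix s :: real
      have "s > 0 \<Longrightarrow> A * s powr b > 0" using A by simp
      then show "ennreal (indicator {0<..} s * s powr q) * indicator {s. A * s powr b \<le> t} s = 0"
        using t by (auto simp: indicator_def)
    qed
    then show "(\<integral>\<^sup>+s. ennreal (indicator {0<..} s * s powr q) * indicator {s. A * s powr b \<le> t} s \<partial>lborel) = 0"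
      by simp
  qed
  finally show ?thesis .
qed

lemma crbN_eq:
  fixes lam \<gamma> \<rho> :: real
  assumes "lam > 0" "\<gamma> > 2" "\<rho> > 0"
  shows "CRB_LB_N lam \<gamma> \<rho> = 4 / \<rho> *
    ((1 / (2*pi*lam*((\<gamma>\<^sup>2) powr (2/(\<gamma>+2)) / 2 * Gamma (1 - 2/(\<gamma>+2))))) powr ((0+1)/(2/(\<gamma>+2))) / (0+1)
      * Gamma ((0+1)/(2/(\<gamma>+2)) + 1))"
proof -
  define G where "G = Gamma (\<gamma>/(\<gamma>+2))"
  define P where "P = (\<gamma>\<^sup>2) powr (2/(\<gamma>+2))"
  define e where "e = \<gamma>/2 + 1"
  have G: "G > 0" unfolding G_def using assms by (intro Gamma_real_pos) auto
  have P: "P > 0" unfolding P_def using assms by simp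
  have g1: "1 - 2/(\<gamma>+2) = \<gamma>/(\<gamma>+2)" using assms by (simp add: field_simps)
  have g2: "(0+1)/(2/(\<gamma>+2)) = e" "e + 1 = 2 + \<gamma>/2" using assms by (auto simp: e_def field_simps)
  have A: "2*pi*lam*((\<gamma>\<^sup>2) powr (2/(\<gamma>+2)) / 2 * Gamma (1 - 2/(\<gamma>+2))) = (pi*lam*G) * P"
    unfolding g1 G_def P_def by simp
  have Pe: "P powr e = \<gamma>\<^sup>2"
  proof -
    have "2/(\<gamma>+2)*(\<gamma>/2+1) = 1" using assms by (simp add: field_simps)
    then show ?thesis unfolding P_def e_def by (simp only: powr_powr) simp
  qed
  have "(1 / ((pi*lam*G) * P)) powr e = 1 / ((pi*lam*G) powr e * \<gamma>\<^sup>2)"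
  proof -
    have "(1 / ((pi*lam*G) * P)) powr e = 1 powr e / ((pi*lam*G) * P) powr e"
      by (rule powr_divide)
    also have "((pi*lam*G) * P) powr e = (pi*lam*G) powr e * P powr e"
      by (rule powr_mult)
    finally show ?thesis by (simp add: Pe)
  qed
  also have "\<dots> = (pi*lam*G) powr (- \<gamma> / 2 - 1) / \<gamma>\<^sup>2"
  proof -
    have "(pi*lam*G) powr (- \<gamma> / 2 - 1) = inverse ((pi*lam*G) powr e)"
      proof -
      have "- \<gamma> / 2 - 1 = -e" unfolding e_def by simp
      then show ?thesis by (simp only: powr_minus)
    qed
    then show ?thesis by (simp only: divide_divide_eq_left[symmetric] inverse_eq_divide)
  qed
  finally have "(1 / ((pi*lam*G) * P)) powr e = (pi*lam*G) powr (- \<gamma> / 2 - 1) / \<gamma>\<^sup>2" .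
  then show ?thesis unfolding A g2 CRB_LB_N_def G_def by simp
qed

lemma Zfun_meas: "(\<lambda>s. Zfun \<gamma> c We s) \<in> borel_measurable lborel"
  unfolding Zfun_def set_lebesgue_integral_def gfun_def
  by measurable

lemma pw:
  fixes x y r :: real
  assumes "0 \<le> y" "0 < r"
  shows "(1-exp(-x))*r \<le> (1-exp(-(x+y)))*r"
    and "(1-exp(-(x+y)))*r \<le> (1-exp(-x))*r + y*r*exp(-x)"
proof -
  define uu where "uu = exp (-x)"
  define vv where "vv = exp (-y)"
  have e: "exp(-(x+y)) = uu * vv" by (simp add: uu_def vv_def exp_add[symmetric])
  have uu: "uu > 0" by (simp add: uu_def)
  have vv: "vv \<le> 1" "1 - y \<le> vv" using assms(1) exp_ge_add_one_self[of "-y"] by (auto simp: vv_def)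
  have "uu * vv \<le> uu" using uu vv by (simp add: mult_left_le)
  then show "(1-exp(-x))*r \<le> (1-exp(-(x+y)))*r" using assms(2) unfolding e uu_def[symmetric]
    by (intro mult_right_mono) auto
  have "uu*(1-vv) \<le> uu*y" using uu vv by (intro mult_left_mono) auto
  then have "(1-uu * vv) \<le> (1-uu) + y*uu" by (simp add: algebra_simps)
  then have "(1-uu * vv)*r \<le> ((1-uu) + y*uu)*r" using assms(2) by (intro mult_right_mono) auto
  then show "(1-exp(-(x+y)))*r \<le> (1-exp(-x))*r + y*r*exp(-x)" unfolding e uu_def[symmetric]
    by (simp add: algebra_simps)
qed

lemma Zb:
  fixes \<gamma> c We s :: real
  assumes g: "\<gamma> > 2" and c: "c > 0" and W: "We \<ge> 0" and s: "s > 0"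
  shows "Zfun \<gamma> c 0 s = (s*\<gamma>\<^sup>2) powr (2/(\<gamma>+2)) / 2 * Gamma (1 - 2/(\<gamma>+2))"
    and "Zfun \<gamma> c 0 s \<le> Zfun \<gamma> c We s"
    and "Zfun \<gamma> c We s \<le> Zfun \<gamma> c 0 s + (s*4*We/c\<^sup>2) *
          ((s*\<gamma>\<^sup>2) powr ((1-\<gamma>+1)/(\<gamma>+2)) / (-(1-\<gamma>+1)) * Gamma (-(1-\<gamma>+1)/(\<gamma>+2) + 1))"
proof -
  define k where "k = s*\<gamma>\<^sup>2"
  define a where "a = \<gamma>+2"
  define D where "D = s*4*We/c\<^sup>2"
  have k: "k > 0" using s g by (simp add: k_def)
  have a: "a > 2" using g by (simp add: a_def)
  have D: "D \<ge> 0" using s W c by (simp add: D_def)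
  define f where "f = (\<lambda>W r. indicator {0<..} r * ((1 - exp (-s * gfun \<gamma> c W r)) * r))"
  have Zf: "Zfun \<gamma> c W s = integral\<^sup>L lborel (f W)" for W
    unfolding Zfun_def set_lebesgue_integral_def f_def by simp
  have fm[measurable]: "f W \<in> borel_measurable lborel" for W
    unfolding f_def gfun_def by measurable
  have f0: "f 0 = (\<lambda>r. indicator {0<..} r * r * (1 - exp (-(k * r powr (-a)))))"
  proof
    fix r :: real
    show "f 0 r = indicator {0<..} r * r * (1 - exp (-(k * r powr (-a))))"
      by (cases "r > 0") (auto simp: f_def gfun_def k_def a_def minus_add_distrib)
  qed
  define e where "e = (\<lambda>r::real. indicator {0<..} r * r powr (1-\<gamma>) * exp (-(k * r powr (-a))))"
  define Z0 where "Z0 = k powr (2/a) / 2 * Gamma (1 - 2/a)"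
  define E where "E = k powr ((1-\<gamma>+1)/a) / (-(1-\<gamma>+1)) * Gamma (-(1-\<gamma>+1)/a + 1)"
  have Z0nn: "Z0 \<ge> 0" unfolding Z0_def using a by (auto intro!: Gamma_real_nonneg)
  have "(\<gamma> - 2)/a \<ge> 0" using a g by simp
  then have "0 < (\<gamma> - 2) / a + 1" by linarith
  then have Enn: "E \<ge> 0" unfolding E_def using a g by (auto intro!: Gamma_real_nonneg divide_nonneg_nonneg mult_nonneg_nonneg)
  have nnx: "0 \<le> 1 - exp (-(k * x powr -a))" for x using k by simp
  have hb0: "has_bochner_integral lborel (f 0) Z0"
    unfolding f0 Z0_def
    by (rule has_bochner_integral_nn_integral) (use F1[OF k a] Z0nn nnx in \<open>auto simp: indicator_def Z0_def\<close>)
  have ae: "-a < 2 - \<gamma>" using g by (simp add: a_def)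
  have hbe: "has_bochner_integral lborel e E"
    unfolding e_def E_def
    by (rule has_bochner_integral_nn_integral)
      (use F2[of k a "1-\<gamma>"] k a g Enn ae in \<open>auto simp: indicator_def E_def\<close>)
  have hbe': "has_bochner_integral lborel (\<lambda>r. D * e r) (D * E)"
    by (rule has_bochner_integral_mult_right[OF hbe])
  have pt: "f 0 r \<le> f We r \<and> f We r \<le> f 0 r + D * e r" for r
  proof (cases "r > 0")
    case True
    define y where "y = s * (4 * We / c\<^sup>2) * r powr (-\<gamma>)"
    have r2: "r\<^sup>2 = r powr 2" using True by simp
    have "r powr (-\<gamma>-2) * r powr 2 = r powr (-\<gamma>-2+2)" by (rule powr_add[symmetric])
    then have p1: "r powr (-\<gamma>-2) * r\<^sup>2 = r powr (-\<gamma>)" unfolding r2 by simp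
    have "s * gfun \<gamma> c We r = s * \<gamma>\<^sup>2 * r powr (-\<gamma>-2) + s * (4 * We / c\<^sup>2) * (r powr (-\<gamma>-2) * r\<^sup>2)"
      unfolding gfun_def by (simp only: distrib_left mult_ac)
    also have "\<dots> = k * r powr (-a) + y"
      unfolding p1 y_def k_def a_def by (simp add: minus_add_distrib)
    finally have sg: "s * gfun \<gamma> c We r = k * r powr (-a) + y" .
    have y: "y \<ge> 0" using s W c by (simp add: y_def)
    have "r powr (1 + -\<gamma>) = r powr 1 * r powr (-\<gamma>)" by (rule powr_add)
    then have p2: "r powr (1-\<gamma>) = r * r powr (-\<gamma>)" using True by (simp add: powr_one)
    have ey: "D * e r = y * r * exp (-(k * r powr (-a)))"
      using True unfolding e_def y_def D_def p2 by (simp add: mult_ac)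
    have "-s * gfun \<gamma> c We r = - (k * r powr (-a) + y)" using sg by simp
    then show ?thesis using pw[OF y True, of "k * r powr (-a)"] True
      unfolding f0 ey unfolding f_def by (simp add: mult_ac)
  qed (simp add: f_def e_def)
  have f0nn: "f 0 r \<ge> 0" for r unfolding f0 using nnx[of r] by (simp add: indicator_def)
  have int0: "integrable lborel (f 0)" using hb0 by (simp add: has_bochner_integral_iff)
  have intS: "integrable lborel (\<lambda>r. f 0 r + D * e r)"
    using has_bochner_integral_add[OF hb0 hbe'] by (rule integrable.intros)
  have intS_eq: "integral\<^sup>L lborel (\<lambda>r. f 0 r + D * e r) = Z0 + D * E"
    using has_bochner_integral_add[OF hb0 hbe'] by (simp add: has_bochner_integral_iff)
  have intW: "integrable lborel (f We)"
  proof (rule Bochner_Integration.integrable_bound[OF intS])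
    show "f We \<in> borel_measurable lborel" by simp
    show "AE x in lborel. norm (f We x) \<le> norm (f 0 x + D * e x)"
      using pt f0nn by (intro AE_I2) (smt (verit) real_norm_def)
  qed
  have Z0eq: "Zfun \<gamma> c 0 s = Z0" unfolding Zf using hb0 by (simp add: has_bochner_integral_iff)
  then show "Zfun \<gamma> c 0 s = (s*\<gamma>\<^sup>2) powr (2/(\<gamma>+2)) / 2 * Gamma (1 - 2/(\<gamma>+2))"
    by (simp add: Z0_def k_def a_def)
  show "Zfun \<gamma> c 0 s \<le> Zfun \<gamma> c We s"
    unfolding Zf using pt int0 intW by (intro integral_mono) auto
  have "Zfun \<gamma> c We s \<le> Z0 + D * E"
    unfolding Zf intS_eq[symmetric] using pt intS intW by (intro integral_mono) auto
  then show "Zfun \<gamma> c We s \<le> Zfun \<gamma> c 0 s + (s*4*We/c\<^sup>2) *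
          ((s*\<gamma>\<^sup>2) powr ((1-\<gamma>+1)/(\<gamma>+2)) / (-(1-\<gamma>+1)) * Gamma (-(1-\<gamma>+1)/(\<gamma>+2) + 1))"
    unfolding Z0eq by (simp add: D_def E_def k_def a_def)
qed

lemma expdiff:
  fixes x y :: real
  assumes "x \<le> y"
  shows "exp(-x) - exp(-y) \<le> exp(-x) * (y - x)"
proof -
  have e: "exp(-y) = exp(-x) * exp(-(y-x))" by (simp add: exp_add[symmetric])
  have h: "1 + (x - y) \<le> exp (x - y)" by (rule exp_ge_add_one_self)
  have "1 - (y-x) \<le> exp(-(y-x))" using h by (simp only: minus_diff_eq)
  then have "exp(-x) * (1 - exp(-(y-x))) \<le> exp(-x) * (y-x)"
    by (intro mult_left_mono) auto
  then show ?thesis unfolding e by (simp add: algebra_simps)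
qed

theorem corollary2:
  fixes lam \<gamma> c \<rho> :: real
  assumes "lam > 0" and "\<gamma> > 2" and "c > 0" and "\<rho> > 0"
  shows "\<exists>C. \<forall>We > 0. \<bar>CRB_LB_N lam \<gamma> \<rho> - CRB_LB lam \<gamma> c \<rho> We\<bar> \<le> C * We"
proof -
  note lam = assms(1) and g = assms(2) and c = assms(3) and rho = assms(4)
  define a where "a = \<gamma> + 2"
  define b where "b = 2/(\<gamma>+2)"
  define \<kappa> where "\<kappa> = (\<gamma>\<^sup>2) powr (2/(\<gamma>+2)) / 2 * Gamma (1 - 2/(\<gamma>+2))"
  define A where "A = 2*pi*lam*\<kappa>"
  define qq where "qq = 1 + (1-\<gamma>+1)/(\<gamma>+2)"
  define K where "K = 4/c\<^sup>2 * ((\<gamma>\<^sup>2) powr ((1-\<gamma>+1)/(\<gamma>+2)) / (-(1-\<gamma>+1)) * Gamma (-(1-\<gamma>+1)/(\<gamma>+2) + 1))"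
  have b: "b > 0" using g by (simp add: b_def)
  have "1 - 2/(\<gamma>+2) > 0" using g by (simp add: field_simps)
  then have \<kappa>: "\<kappa> > 0" unfolding \<kappa>_def using g by (simp add: Gamma_real_pos)
  have A: "A > 0" unfolding A_def using lam \<kappa> by simp
  have qq: "qq > -1" "qq \<ge> 0" using g unfolding qq_def by (auto simp: field_simps)
  have "(\<gamma> - 2)/(\<gamma>+2) \<ge> 0" using g by simp
  then have "0 < (\<gamma> - 2)/(\<gamma>+2) + 1" by linarith
  then have K: "K \<ge> 0" unfolding K_def using g c
    by (auto intro!: Gamma_real_nonneg divide_nonneg_nonneg mult_nonneg_nonneg)
  have Z0: "2 * pi * lam * Zfun \<gamma> c 0 s = A * s powr b" if s: "s > 0" for s
  proof -
    have "(s*\<gamma>\<^sup>2) powr (2/(\<gamma>+2)) = s powr b * (\<gamma>\<^sup>2) powr (2/(\<gamma>+2))"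
      unfolding b_def by (rule powr_mult)
    then show ?thesis using Zb(1)[OF g c _ s, of 0] unfolding A_def \<kappa>_def by (simp add: mult_ac)
  qed
  have ZW: "Zfun \<gamma> c We s \<le> Zfun \<gamma> c 0 s + We * K * s powr qq" if s: "s > 0" and W: "We \<ge> 0" for s We
  proof -
    have "(s*\<gamma>\<^sup>2) powr ((1-\<gamma>+1)/(\<gamma>+2)) = s powr ((1-\<gamma>+1)/(\<gamma>+2)) * (\<gamma>\<^sup>2) powr ((1-\<gamma>+1)/(\<gamma>+2))"
      by (rule powr_mult)
    moreover have "s powr qq = s * s powr ((1-\<gamma>+1)/(\<gamma>+2))"
      unfolding qq_def using s by (simp add: powr_add)
    ultimately show ?thesis using Zb(3)[OF g c W s] unfolding K_def by (simp add: mult_ac)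
  qed
  have ZW0: "Zfun \<gamma> c 0 s \<le> Zfun \<gamma> c We s" if s: "s > 0" and W: "We \<ge> 0" for s We
    using Zb(2)[OF g c W s] .
  define h0 where "h0 = (\<lambda>s::real. indicator {0<..} s * exp (-(A * s powr b)))"
  define I0 where "I0 = (1/A) powr ((0+1)/b) / (0+1) * Gamma ((0+1)/b + 1)"
  define M where "M = (1/A) powr ((qq+1)/b) / (qq+1) * Gamma ((qq+1)/b + 1)"
  define u where "u = (\<lambda>s::real. indicator {0<..} s * s powr qq * exp (-(A * s powr b)))"
  have h0': "h0 = (\<lambda>s. indicator {0<..} s * s powr 0 * exp (-(A * s powr b)))"
    unfolding h0_def by (auto simp: indicator_def)
  have "1/b + 1 > 0" using b by (smt (verit) divide_pos_pos zero_less_one)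
  moreover have "(qq+1)/b > 0" using b qq by auto
  ultimately have I0nn: "I0 \<ge> 0" unfolding I0_def using b by (auto intro!: Gamma_real_nonneg)
  have pM: "(qq+1)/b + 1 > 0" using \<open>(qq+1)/b > 0\<close> by linarith
  have Mnn: "M \<ge> 0" unfolding M_def using qq
    by (intro mult_nonneg_nonneg divide_nonneg_nonneg Gamma_real_nonneg powr_ge_zero pM) auto
  have hbh0: "has_bochner_integral lborel h0 I0"
    unfolding h0'
    by (rule has_bochner_integral_nn_integral) (use F4[OF A b, of 0] I0nn in \<open>auto simp: I0_def\<close>)
  have hbu: "has_bochner_integral lborel u M"
    unfolding u_def
    by (rule has_bochner_integral_nn_integral) (use F4[OF A b qq(1)] Mnn in \<open>auto simp: M_def\<close>)
  show ?thesis
  proof (intro exI allI impI)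
    fix We :: real assume W: "We > 0"
    define hW where "hW = (\<lambda>s. indicator {0<..} s * exp (- 2 * pi * lam * Zfun \<gamma> c We s))"
    have CRB: "CRB_LB lam \<gamma> c \<rho> We = 4/\<rho> * integral\<^sup>L lborel hW"
      unfolding CRB_LB_def set_lebesgue_integral_def hW_def by simp
    have CRBN: "CRB_LB_N lam \<gamma> \<rho> = 4/\<rho> * I0"
      unfolding crbN_eq[OF lam g rho] I0_def A_def \<kappa>_def b_def ..
    have hWm: "hW \<in> borel_measurable lborel"
      unfolding hW_def using Zfun_meas[of \<gamma> c We] by measurable
    have pt: "0 \<le> hW s \<and> hW s \<le> h0 s \<and> h0 s - hW s \<le> (2*pi*lam*We*K) * u s" for s
    proof (cases "s > 0")
      case True
      have x: "A * s powr b = 2 * pi * lam * Zfun \<gamma> c 0 s" using Z0[OF True] by simp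
      have le: "2 * pi * lam * Zfun \<gamma> c 0 s \<le> 2 * pi * lam * Zfun \<gamma> c We s"
        using ZW0[OF True, of We] W lam by simp
      have d: "2 * pi * lam * Zfun \<gamma> c We s - 2 * pi * lam * Zfun \<gamma> c 0 s \<le> 2*pi*lam*(We*K * s powr qq)"
      proof -
        have "2*pi*lam*(Zfun \<gamma> c We s) \<le> 2*pi*lam*(Zfun \<gamma> c 0 s + We * K * s powr qq)"
          by (rule mult_left_mono[OF ZW[OF True]]) (use W lam in simp_all)
        then show ?thesis by (simp add: algebra_simps)
      qed
      have ed: "exp (-(A * s powr b)) - exp (- (2 * pi * lam * Zfun \<gamma> c We s))
          \<le> exp (-(A * s powr b)) * (2*pi*lam*(We*K * s powr qq))"
        using expdiff[OF le] d unfolding x[symmetric]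
        by (smt (verit) exp_gt_zero mult_left_mono)
      show ?thesis using True ed le unfolding hW_def h0_def u_def x
        by (auto simp: mult_ac)
    qed (simp add: hW_def h0_def u_def)
    have int0: "integrable lborel h0" using hbh0 by (rule integrable.intros)
    have intu: "integrable lborel (\<lambda>s. (2*pi*lam*We*K) * u s)"
      using has_bochner_integral_mult_right[OF hbu] by (rule integrable.intros)
    have intW: "integrable lborel hW"
    proof (rule Bochner_Integration.integrable_bound[OF int0 hWm])
      show "AE x in lborel. norm (hW x) \<le> norm (h0 x)"
        by (intro AE_I2) (smt (verit) pt real_norm_def)
    qed
    have "integral\<^sup>L lborel hW \<le> integral\<^sup>L lborel h0"
      using pt int0 intW by (intro integral_mono) auto
    then have i1: "integral\<^sup>L lborel hW \<le> I0" using hbh0 by (simp add: has_bochner_integral_iff)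
    have "integral\<^sup>L lborel h0 - integral\<^sup>L lborel hW = integral\<^sup>L lborel (\<lambda>s. h0 s - hW s)"
      using int0 intW by simp
    also have "\<dots> \<le> integral\<^sup>L lborel (\<lambda>s. (2*pi*lam*We*K) * u s)"
      using pt int0 intW intu by (intro integral_mono) auto
    also have "\<dots> = (2*pi*lam*We*K) * M" using hbu by (simp add: has_bochner_integral_iff)
    finally have i2: "I0 - integral\<^sup>L lborel hW \<le> (2*pi*lam*We*K) * M"
      using hbh0 by (simp add: has_bochner_integral_iff)
    have "\<bar>CRB_LB_N lam \<gamma> \<rho> - CRB_LB lam \<gamma> c \<rho> We\<bar> = 4/\<rho> * (I0 - integral\<^sup>L lborel hW)"
    proof -
      have e1: "4/\<rho> * I0 - 4/\<rho> * integral\<^sup>L lborel hW = 4/\<rho> * (I0 - integral\<^sup>L lborel hW)"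
        by (simp add: right_diff_distrib)
      have "4/\<rho> * (I0 - integral\<^sup>L lborel hW) \<ge> 0" using i1 rho by simp
      then show ?thesis unfolding CRB CRBN e1 by (rule abs_of_nonneg)
    qed
    also have "\<dots> \<le> 4/\<rho> * ((2*pi*lam*We*K) * M)"
      using i2 rho by (intro mult_left_mono) auto
    also have "\<dots> = (4/\<rho>*2*pi*lam*K*M) * We" by (simp add: mult_ac)
    finally show "\<bar>CRB_LB_N lam \<gamma> \<rho> - CRB_LB lam \<gamma> c \<rho> We\<bar> \<le> (4/\<rho>*2*pi*lam*K*M) * We" .
  qed
qed

end
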